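(* Let $N\ge 1$, $0<s<1$ and $1<p<\infty$ be such that $s\,p>N$, and define \[ \theta_{N,s,p}:=\omega_N\,\sup_{T>1} \frac{(T-1)^N}{\Big((T-1)^s+T^s\Big)^p}. \] Then \[ \theta_{N,s,p}\,\Lambda_{s,p}(B_1(0))\le\mathfrak{m}_{s,p}(\mathbb{R}^N). \]
   Context: $\omega_N$ is the Lebesgue measure of the unit ball $B_1(0)\subseteq\mathbb{R}^N$. For an open set $\Omega$ and $0<s<1$, $[\varphi]_{W^{s,p}(\Omega)}=\left(\iint_{\Omega\times\Omega}\frac{|\varphi(x)-\varphi(y)|^p}{|x-y|^{N+s\,p}}dx\,dy\right)^{1/p}$. For $0<\alpha\le1$ and $E\subseteq\mathbb{R}^N$, $[\varphi]_{C^{0,\alpha}(E)}=\sup_{x,y\in E,\,x\ne y}\frac{|\varphi(x)-\varphi(y)|}{|x-y|^\alpha}$. Set $\alpha_{s,p}=s-N/p$. The sharp Morrey constant is $\mathfrak{m}_{s,p}(\mathbb{R}^N)=\inf\{[\varphi]^p_{W^{s,p}(\mathbb{R}^N)}:\varphi\in C^\infty_0(\mathbb{R}^N),\ [\varphi]_{C^{0,\alpha_{s,p}}(\mathbb{R}^N)}=1\}$. For a ball $B_r(x_0)$, $\Lambda_{s,p}(B_r(x_0))=\inf\{[\varphi]^p_{W^{s,p}(B_r(x_0))}:\varphi\in C^1(\overline{B_r(x_0)}),\ \|\varphi\|_{L^p(B_r(x_0))}=1,\ \varphi(x_0)=0\}$. *)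

theory Defs
  imports "HOL-Analysis.Analysis"
begin

text \<open>omega_N: Lebesgue measure of the unit ball in the N-dimensional space 'a (N = DIM('a)).\<close>
definition omega :: "'a::euclidean_space itself \<Rightarrow> real" where
  "omega _ = measure lborel (ball (0::'a) 1)"

fun Ck :: "nat \<Rightarrow> ('a::euclidean_space \<Rightarrow> real) \<Rightarrow> bool" where
  "Ck 0 f = continuous_on UNIV f"
| "Ck (Suc k) f = (\<exists>g::'a \<Rightarrow> 'a \<Rightarrow> real.
      (\<forall>x. (f has_derivative (\<lambda>h. \<Sum>i\<in>Basis. (h \<bullet> i) * g i x)) (at x)) \<and>
      (\<forall>i\<in>Basis. Ck k (g i)))"

definition C_infty_0 :: "('a::euclidean_space \<Rightarrow> real) \<Rightarrow> bool" where
  "C_infty_0 f \<longleftrightarrow> (\<forall>k. Ck k f) \<and> compact (closure {x. f x \<noteq> 0})"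

definition C1_closed_ball :: "'a::euclidean_space \<Rightarrow> real \<Rightarrow> ('a \<Rightarrow> real) \<Rightarrow> bool" where
  "C1_closed_ball x0 r f \<longleftrightarrow> continuous_on (cball x0 r) f \<and>
     (\<exists>g::'a \<Rightarrow> 'a \<Rightarrow> real.
        (\<forall>x\<in>ball x0 r. (f has_derivative (\<lambda>h. \<Sum>i\<in>Basis. (h \<bullet> i) * g i x)) (at x)) \<and>
        (\<forall>i\<in>Basis. continuous_on (cball x0 r) (g i)))"

definition gagliardo_pow :: "'a::euclidean_space set \<Rightarrow> real \<Rightarrow> real \<Rightarrow> ('a \<Rightarrow> real) \<Rightarrow> ennreal" where
  "gagliardo_pow \<Omega> s p \<phi> =
     (\<integral>\<^sup>+ z. indicator (\<Omega> \<times> \<Omega>) z *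
        ennreal (\<bar>\<phi> (fst z) - \<phi> (snd z)\<bar> powr p /
                 dist (fst z) (snd z) powr (real DIM('a) + s * p)) \<partial>(lborel \<Otimes>\<^sub>M lborel))"

definition holder_seminorm :: "'a::euclidean_space set \<Rightarrow> real \<Rightarrow> ('a \<Rightarrow> real) \<Rightarrow> ennreal" where
  "holder_seminorm E \<alpha> \<phi> =
     (SUP z \<in> {(x, y). x \<in> E \<and> y \<in> E \<and> x \<noteq> y}.
        ennreal (\<bar>\<phi> (fst z) - \<phi> (snd z)\<bar> / dist (fst z) (snd z) powr \<alpha>))"

definition Lp_norm_on :: "'a::euclidean_space set \<Rightarrow> real \<Rightarrow> ('a \<Rightarrow> real) \<Rightarrow> real" where
  "Lp_norm_on S p \<phi> =
     (enn2real (\<integral>\<^sup>+ x. indicator S x * ennreal (\<bar>\<phi> x\<bar> powr p) \<partial>lborel)) powr (1 / p)"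

definition alpha_sp :: "'a::euclidean_space itself \<Rightarrow> real \<Rightarrow> real \<Rightarrow> real" where
  "alpha_sp _ s p = s - real DIM('a) / p"

definition morrey_const :: "'a::euclidean_space itself \<Rightarrow> real \<Rightarrow> real \<Rightarrow> ennreal" where
  "morrey_const TYPE_a s p =
     Inf {gagliardo_pow (UNIV::'a set) s p \<phi> | \<phi>.
            C_infty_0 \<phi> \<and> holder_seminorm (UNIV::'a set) (alpha_sp TYPE_a s p) \<phi> = 1}"

definition Lambda :: "'a::euclidean_space \<Rightarrow> real \<Rightarrow> real \<Rightarrow> real \<Rightarrow> ennreal" where
  "Lambda x0 r s p =
     Inf {gagliardo_pow (ball x0 r) s p \<phi> | \<phi>.
            C1_closed_ball x0 r \<phi> \<and> Lp_norm_on (ball x0 r) p \<phi> = 1 \<and> \<phi> x0 = 0}"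

definition theta :: "'a::euclidean_space itself \<Rightarrow> real \<Rightarrow> real \<Rightarrow> real" where
  "theta TYPE_a s p = omega TYPE_a *
     (SUP T \<in> {1<..}. (T - 1) ^ DIM('a) / ((T - 1) powr s + T powr s) powr p)"

end

theory Submission imports Defs begin

lemma nn_integral_affine_eucl:
  fixes f :: "'a::euclidean_space \<Rightarrow> ennreal"
  assumes [measurable]: "f \<in> borel_measurable borel" and r: "r > 0"
  shows "(\<integral>\<^sup>+x. f x \<partial>lborel) = ennreal (r ^ DIM('a)) * (\<integral>\<^sup>+x. f (t + r *\<^sub>R x) \<partial>lborel)"
proof -
  have "r \<noteq> 0" using r by simp
  show ?thesis
    by (subst lborel_affine[OF \<open>r \<noteq> 0\<close>, of t])
       (use r in \<open>simp add: nn_integral_density nn_integral_distr nn_integral_cmult\<close>)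
qed

lemma emeasure_ball_omega:
  fixes x :: "'a::euclidean_space"
  assumes "r \<ge> 0"
  shows "emeasure lborel (ball x r) = ennreal (omega TYPE('a) * r ^ DIM('a))"
proof -
  have "emeasure lborel (ball x r) = emeasure lebesgue (ball x r)" by simp
  also have "\<dots> = ennreal (r ^ DIM('a)) * emeasure lebesgue (ball (0 :: 'a) 1)"
    using emeasure_lebesgue_ball_conv_unit_ball[OF assms] by simp
  also have "emeasure lebesgue (ball (0 :: 'a) 1) = ennreal (omega TYPE('a))"
    unfolding omega_def using emeasure_lborel_ball_finite[of "0::'a" 1]
    by (simp add: emeasure_eq_ennreal_measure)
  finally show ?thesis using assms by (simp add: ennreal_mult omega_def mult.commute)
qed

lemma conv_ineq:
  fixes a u v l p :: real
  assumes "0 \<le> a" "a \<le> u + v" "0 \<le> u" "0 \<le> v" "0 < l" "l < 1" "1 \<le> p"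
  shows "a powr p \<le> l powr (1 - p) * u powr p + (1 - l) powr (1 - p) * v powr p"
proof -
  have "a powr p \<le> (u + v) powr p" using assms by (intro powr_mono2) auto
  also have "\<dots> \<le> l powr (1 - p) * u powr p + (1 - l) powr (1 - p) * v powr p"
  proof (cases "u = 0 \<or> v = 0")
    case True
    have g1: "l powr (1 - p) \<ge> 1" "(1 - l) powr (1 - p) \<ge> 1"
    proof -
      have "l powr (p - 1) \<le> 1" "(1 - l) powr (p - 1) \<le> 1" "l powr (p - 1) > 0" "(1 - l) powr (p - 1) > 0"
        using assms by (auto intro!: powr_le1)
      moreover have "l powr (1 - p) = inverse (l powr (p - 1))" "(1 - l) powr (1 - p) = inverse ((1 - l) powr (p - 1))"
        using assms by (auto simp: powr_minus[symmetric])
      ultimately show "l powr (1 - p) \<ge> 1" "(1 - l) powr (1 - p) \<ge> 1"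
        by (auto simp: one_le_inverse)
    qed
    have nn: "u powr p \<ge> 0" "v powr p \<ge> 0" "l powr (1 - p) \<ge> 0" "(1 - l) powr (1 - p) \<ge> 0" by auto
    show ?thesis
    proof (cases "u = 0")
      case True
      then show ?thesis using g1 nn mult_right_mono[OF g1(2) nn(2)] by simp
    next
      case False
      then have "v = 0" using \<open>u = 0 \<or> v = 0\<close> by simp
      then show ?thesis using g1 nn mult_right_mono[OF g1(1) nn(1)] by simp
    qed
  next
    case False
    then have uv: "u > 0" "v > 0" using assms by auto
    have "(l * (u / l) + (1 - l) * (v / (1 - l))) powr p \<le> l * (u / l) powr p + (1 - l) * (v / (1 - l)) powr p"
      using convex_onD[OF powr_convex[of p], of "1 - l" "u / l" "v / (1 - l)"] assms uv by simp
    also have "\<dots> = l powr (1 - p) * u powr p + (1 - l) powr (1 - p) * v powr p"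
      using assms uv by (simp add: powr_divide powr_diff field_simps)
    finally show ?thesis using assms by simp
  qed
  finally show ?thesis .
qed

lemma mem_ball_affine:
  fixes c w :: "'a::real_normed_vector"
  assumes "r > 0"
  shows "c + r *\<^sub>R w \<in> ball c r \<longleftrightarrow> w \<in> ball 0 1"
  using assms by (simp add: dist_norm)

lemma key_scaling:
  fixes \<phi> :: "'a::euclidean_space \<Rightarrow> real" and g :: "'a \<Rightarrow> 'a \<Rightarrow> real"
  assumes cont: "continuous_on UNIV \<phi>"
    and der: "\<And>x. (\<phi> has_derivative (\<lambda>h. \<Sum>i\<in>Basis. (h \<bullet> i) * g i x)) (at x)"
    and gc: "\<And>i. i \<in> Basis \<Longrightarrow> continuous_on UNIV (g i)"
    and r: "r > 0" and p: "p > 0"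
  shows "Lambda (0::'a) 1 s p * (\<integral>\<^sup>+ z. indicator (ball c r) z * ennreal (\<bar>\<phi> z - \<phi> c\<bar> powr p) \<partial>lborel)
     \<le> ennreal (r powr (s * p)) * gagliardo_pow (UNIV::'a set) s p \<phi>"
proof -
  have [measurable]: "\<phi> \<in> borel_measurable borel" using cont by (rule borel_measurable_continuous_onI)
  have [measurable]: "ball x e \<in> sets borel" for x :: 'a and e by simp
  define I where "I = (\<integral>\<^sup>+ z. indicator (ball c r) z * ennreal (\<bar>\<phi> z - \<phi> c\<bar> powr p) \<partial>lborel)"
  define N where "N = DIM('a)"
  show ?thesis
  proof (cases "I = 0")
    case True
    then show ?thesis unfolding I_def[symmetric] by simp
  next
    case False
    have "bounded ((\<lambda>z. \<phi> z - \<phi> c) ` cball c r)"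
      by (intro compact_imp_bounded compact_continuous_image continuous_intros
          continuous_on_subset[OF cont]) auto
    then obtain B0 where B0': "\<forall>z\<in>cball c r. \<bar>\<phi> z - \<phi> c\<bar> \<le> B0"
      by (auto simp: bounded_iff)
    then have B0: "\<And>z. z \<in> cball c r \<Longrightarrow> \<bar>\<phi> z - \<phi> c\<bar> \<le> B0" by blast
    define B where "B = B0 powr p"
    have B: "\<bar>\<phi> z - \<phi> c\<bar> powr p \<le> B" if "z \<in> cball c r" for z
      unfolding B_def using B0[OF that] p by (intro powr_mono2) auto
    have "I \<le> (\<integral>\<^sup>+ z. ennreal B * indicator (ball c r) z \<partial>lborel)"
      unfolding I_def by (intro nn_integral_mono) (auto simp: indicator_def intro!: ennreal_leI B)
    also have "\<dots> = ennreal B * emeasure lborel (ball c r)" by (rule nn_integral_cmult_indicator) simp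
    also have "\<dots> < \<infinity>" using emeasure_lborel_ball_finite[of c r] by (simp add: ennreal_mult_less_top)
    finally have Ifin: "I < \<infinity>" .
    define Ir where "Ir = enn2real I"
    have IIr: "I = ennreal Ir" unfolding Ir_def using Ifin by (intro ennreal_enn2real[symmetric]) simp
    have "Ir \<ge> 0" unfolding Ir_def by (rule enn2real_nonneg)
    moreover have "Ir \<noteq> 0" using False IIr by auto
    ultimately have Irpos: "Ir > 0" by linarith
    have rN: "r ^ N > 0" using r by (rule zero_less_power)
    define K where "K = (Ir / r ^ N) powr (1 / p)"
    have Kpos: "K > 0" unfolding K_def using Irpos rN r by (intro powr_gt_zero[THEN iffD2]) simp
    have "K powr p = (Ir / r ^ N) powr (1 / p * p)" unfolding K_def by (rule powr_powr)
    also have "1 / p * p = 1" using p by simp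
    also have "(Ir / r ^ N) powr 1 = Ir / r ^ N" using Irpos rN by (intro powr_one) simp
    finally have Kp: "K powr p = Ir / r ^ N" .
    define u where "u = (\<lambda>w. (\<phi> (c + r *\<^sub>R w) - \<phi> c) / K)"
    have [measurable]: "u \<in> borel_measurable borel" unfolding u_def by measurable
    have C1: "C1_closed_ball (0::'a) 1 u"
      unfolding C1_closed_ball_def
    proof (intro conjI exI[of _ "\<lambda>i w. r / K * g i (c + r *\<^sub>R w)"] ballI)
      show "continuous_on (cball 0 1) u" unfolding u_def
        by (intro continuous_intros continuous_on_compose2[OF cont]) (use Kpos in auto)
      show "continuous_on (cball 0 1) (\<lambda>w. r / K * g i (c + r *\<^sub>R w))" if "i \<in> Basis" for i
        by (intro continuous_intros continuous_on_compose2[OF gc[OF that]]) auto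
      fix x :: 'a
      have d1: "((\<lambda>w. \<phi> (c + r *\<^sub>R w)) has_derivative (\<lambda>h. \<Sum>i\<in>Basis. ((r *\<^sub>R h) \<bullet> i) * g i (c + r *\<^sub>R x))) (at x)"
      proof (rule has_derivative_compose[OF _ der])
        show "((\<lambda>w. c + r *\<^sub>R w) has_derivative (\<lambda>h. r *\<^sub>R h)) (at x)"
          by (auto intro!: derivative_eq_intros)
      qed
      have d2: "(u has_derivative (\<lambda>h. (\<Sum>i\<in>Basis. ((r *\<^sub>R h) \<bullet> i) * g i (c + r *\<^sub>R x)) / K)) (at x)"
        unfolding u_def using Kpos by (auto intro!: derivative_eq_intros d1)
      show "(u has_derivative (\<lambda>h. \<Sum>i\<in>Basis. (h \<bullet> i) * (r / K * g i (c + r *\<^sub>R x)))) (at x)"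
        by (rule has_derivative_eq_rhs[OF d2]) (auto simp: sum_divide_distrib intro!: sum.cong)
    qed
    have u0: "u 0 = 0" by (simp add: u_def)
    define J where "J = (\<integral>\<^sup>+ w. indicator (ball (0::'a) 1) w * ennreal (\<bar>u w\<bar> powr p) \<partial>lborel)"
    have "I * ennreal (1 / K powr p) = (\<integral>\<^sup>+ z. indicator (ball c r) z * ennreal (\<bar>\<phi> z - \<phi> c\<bar> powr p / K powr p) \<partial>lborel)"
      unfolding I_def
    proof (subst nn_integral_multc[symmetric])
      show "(\<lambda>z. indicator (ball c r) z * ennreal (\<bar>\<phi> z - \<phi> c\<bar> powr p)) \<in> borel_measurable lborel"
        unfolding measurable_lborel2 by measurable
      show "(\<integral>\<^sup>+ z. indicator (ball c r) z * ennreal (\<bar>\<phi> z - \<phi> c\<bar> powr p) * ennreal (1 / K powr p) \<partial>lborel) =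
        (\<integral>\<^sup>+ z. indicator (ball c r) z * ennreal (\<bar>\<phi> z - \<phi> c\<bar> powr p / K powr p) \<partial>lborel)"
      proof (intro nn_integral_cong)
        fix z
        have "ennreal (\<bar>\<phi> z - \<phi> c\<bar> powr p) * ennreal (1 / K powr p) = ennreal (\<bar>\<phi> z - \<phi> c\<bar> powr p * (1 / K powr p))"
          by (rule ennreal_mult[symmetric]) (use Kpos in auto)
        then show "indicator (ball c r) z * ennreal (\<bar>\<phi> z - \<phi> c\<bar> powr p) * ennreal (1 / K powr p) =
          indicator (ball c r) z * ennreal (\<bar>\<phi> z - \<phi> c\<bar> powr p / K powr p)"
          by (simp add: mult.assoc)
      qed
    qed
    also have "\<dots> = ennreal (r ^ N) * (\<integral>\<^sup>+ w. indicator (ball c r) (c + r *\<^sub>R w) * ennreal (\<bar>\<phi> (c + r *\<^sub>R w) - \<phi> c\<bar> powr p / K powr p) \<partial>lborel)"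
      unfolding N_def by (rule nn_integral_affine_eucl[OF _ r]) measurable
    also have "(\<integral>\<^sup>+ w. indicator (ball c r) (c + r *\<^sub>R w) * ennreal (\<bar>\<phi> (c + r *\<^sub>R w) - \<phi> c\<bar> powr p / K powr p) \<partial>lborel) = J"
      unfolding J_def
    proof (intro nn_integral_cong)
      fix w :: 'a
      have "c + r *\<^sub>R w \<in> ball c r \<longleftrightarrow> w \<in> ball 0 1"
        using r by (simp add: dist_norm)
      moreover have "\<bar>u w\<bar> powr p = \<bar>\<phi> (c + r *\<^sub>R w) - \<phi> c\<bar> powr p / K powr p"
        using Kpos by (simp add: u_def powr_divide)
      ultimately show "indicator (ball c r) (c + r *\<^sub>R w) * ennreal (\<bar>\<phi> (c + r *\<^sub>R w) - \<phi> c\<bar> powr p / K powr p)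
          = indicator (ball 0 1) w * ennreal (\<bar>u w\<bar> powr p)" by (simp add: indicator_def)
    qed
    finally have eqJ: "I * ennreal (1 / K powr p) = ennreal (r ^ N) * J" .
    have "I * ennreal (1 / K powr p) = ennreal (Ir * (1 / K powr p))"
      unfolding IIr using Irpos by (subst ennreal_mult) (simp_all add: Kpos)
    also have "Ir * (1 / K powr p) = r ^ N" unfolding Kp using Irpos rN by simp
    finally have "ennreal (r ^ N) * J = ennreal (r ^ N) * 1" using eqJ by simp
    then have J1: "J = 1" using rN r unfolding ennreal_mult_cancel_left by simp
    have Lp: "Lp_norm_on (ball (0::'a) 1) p u = 1"
      unfolding Lp_norm_on_def J_def[symmetric] J1 by simp
    have Lam: "Lambda (0::'a) 1 s p \<le> gagliardo_pow (ball 0 1) s p u"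
      unfolding Lambda_def using C1 Lp u0 by (intro Inf_lower) blast
    define q where "q = real DIM('a) + s * p"
    define H where "H = (\<lambda>z::'a \<times> 'a. indicator (ball 0 1 \<times> ball 0 1) z *
        ennreal (\<bar>u (fst z) - u (snd z)\<bar> powr p / dist (fst z) (snd z) powr q))"
    define F where "F = (\<lambda>z::'a \<times> 'a. indicator (ball c r \<times> ball c r) z *
        ennreal (\<bar>\<phi> (fst z) - \<phi> (snd z)\<bar> powr p / dist (fst z) (snd z) powr q))"
    have [measurable]: "ball x e \<times> ball y f \<in> sets (borel :: ('a \<times> 'a) measure)" for x y :: 'a and e f
      by (intro borel_open open_Times) auto
    have [measurable]: "(fst :: 'a \<times> 'a \<Rightarrow> 'a) \<in> borel_measurable borel"
      by (intro borel_measurable_continuous_onI continuous_intros)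
    have [measurable]: "(snd :: 'a \<times> 'a \<Rightarrow> 'a) \<in> borel_measurable borel"
      by (intro borel_measurable_continuous_onI continuous_intros)
    have [measurable]: "H \<in> borel_measurable borel" unfolding H_def by measurable
    have [measurable]: "F \<in> borel_measurable borel" unfolding F_def by measurable
    have G1: "gagliardo_pow (ball 0 1) s p u = (\<integral>\<^sup>+ z. H z \<partial>lborel)"
      unfolding gagliardo_pow_def H_def q_def lborel_prod ..
    have Gr: "gagliardo_pow (ball c r) s p \<phi> = (\<integral>\<^sup>+ z. F z \<partial>lborel)"
      unfolding gagliardo_pow_def F_def q_def lborel_prod ..
    have "(\<integral>\<^sup>+ z. F z \<partial>lborel) = ennreal (r ^ DIM('a \<times> 'a)) * (\<integral>\<^sup>+ z. F ((c, c) + r *\<^sub>R z) \<partial>lborel)"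
      by (rule nn_integral_affine_eucl[OF _ r]) measurable
    also have "(\<integral>\<^sup>+ z. F ((c, c) + r *\<^sub>R z) \<partial>lborel) = (\<integral>\<^sup>+ z. ennreal (K powr p / r powr q) * H z \<partial>lborel)"
    proof (intro nn_integral_cong)
      fix z :: "'a \<times> 'a"
      obtain a b where z: "z = (a, b)" by (cases z)
      have e1: "\<phi> (c + r *\<^sub>R a) - \<phi> (c + r *\<^sub>R b) = K * (u a - u b)"
        unfolding u_def using Kpos by (simp add: field_simps)
      have e2: "dist (c + r *\<^sub>R a) (c + r *\<^sub>R b) = r * dist a b"
        using r by (simp add: dist_norm algebra_simps flip: scaleR_diff_right)
      have e3: "\<bar>\<phi> (c + r *\<^sub>R a) - \<phi> (c + r *\<^sub>R b)\<bar> powr p / dist (c + r *\<^sub>R a) (c + r *\<^sub>R b) powr q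
          = (K powr p / r powr q) * (\<bar>u a - u b\<bar> powr p / dist a b powr q)"
        unfolding e1 e2 using Kpos r by (simp add: abs_mult powr_mult)
      have i: "indicator (ball c r \<times> ball c r) (c + r *\<^sub>R a, c + r *\<^sub>R b) = (indicator (ball 0 1 \<times> ball 0 1) (a, b) :: ennreal)"
        unfolding indicator_def mem_Times_iff fst_conv snd_conv mem_ball_affine[OF r] by simp
      have zz: "(c, c) + r *\<^sub>R (a, b) = (c + r *\<^sub>R a, c + r *\<^sub>R b)" by simp
      have en: "ennreal (K powr p / r powr q * (\<bar>u a - u b\<bar> powr p / dist a b powr q))
          = ennreal (K powr p / r powr q) * ennreal (\<bar>u a - u b\<bar> powr p / dist a b powr q)"
        by (rule ennreal_mult) auto
      show "F ((c, c) + r *\<^sub>R z) = ennreal (K powr p / r powr q) * H z"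
        unfolding F_def H_def z zz fst_conv snd_conv i e3 en by (simp only: mult_ac)
    qed
    also have "\<dots> = ennreal (K powr p / r powr q) * (\<integral>\<^sup>+ z. H z \<partial>lborel)"
      by (rule nn_integral_cmult) measurable
    finally have scale: "gagliardo_pow (ball c r) s p \<phi> = ennreal (r ^ (2 * N)) * ennreal (K powr p / r powr q) * gagliardo_pow (ball 0 1) s p u"
      unfolding Gr G1 N_def by (simp add: mult_2 mult.assoc)
    have mono: "gagliardo_pow (ball c r) s p \<phi> \<le> gagliardo_pow UNIV s p \<phi>"
      unfolding gagliardo_pow_def
      by (intro nn_integral_mono mult_right_mono) (auto simp: indicator_def)
    have real_eq: "r powr (s * p) * (r ^ (2 * N) * (K powr p / r powr q)) = Ir"
    proof -
      have "r powr q = r ^ N * r powr (s * p)"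
        unfolding q_def N_def using r by (simp add: powr_add powr_realpow)
      then show ?thesis unfolding Kp using r by (simp add: field_simps power_mult_distrib mult_2 power_add mult_2_right)
    qed
    have "Lambda (0::'a) 1 s p * I \<le> gagliardo_pow (ball 0 1) s p u * ennreal Ir"
      unfolding IIr by (rule mult_right_mono[OF Lam]) simp
    also have "\<dots> = ennreal (r powr (s * p)) * gagliardo_pow (ball c r) s p \<phi>"
    proof -
      have a1: "ennreal (r ^ (2 * N) * (K powr p / r powr q)) = ennreal (r ^ (2 * N)) * ennreal (K powr p / r powr q)"
        by (rule ennreal_mult) (use r in auto)
      have a2: "ennreal (r powr (s * p) * (r ^ (2 * N) * (K powr p / r powr q))) = ennreal (r powr (s * p)) * ennreal (r ^ (2 * N) * (K powr p / r powr q))"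
        by (rule ennreal_mult) (use r Kpos in auto)
      show ?thesis unfolding scale real_eq[symmetric] a2 a1 by (simp only: mult_ac)
    qed
    also have "\<dots> \<le> ennreal (r powr (s * p)) * gagliardo_pow UNIV s p \<phi>"
      by (rule mult_left_mono[OF mono]) simp
    finally show ?thesis unfolding I_def .
  qed
qed


lemma powr_weight_aux:
  fixes a S p :: real
  assumes "a > 0" "S > 0"
  shows "(a / S) powr (1 - p) * a powr p = a * S powr (p - 1)"
proof -
  have "(a / S) powr (1 - p) * a powr p = a powr (1 - p) * a powr p / S powr (1 - p)"
    using assms by (simp add: powr_divide)
  also have "a powr (1 - p) * a powr p = a" using assms by (simp add: powr_add[symmetric])
  also have "a / S powr (1 - p) = a * S powr (p - 1)"
    using assms by (simp add: powr_diff[of S 1 p] powr_diff[of S p 1] field_simps)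
  finally show ?thesis .
qed

lemma powr_weight:
  fixes a b p :: real
  assumes "a > 0" "b > 0"
  shows "(a / (a + b)) powr (1 - p) * a powr p + (1 - a / (a + b)) powr (1 - p) * b powr p = (a + b) powr p"
proof -
  have "1 - a / (a + b) = b / (a + b)" using assms by (simp add: field_simps)
  then have "(a / (a + b)) powr (1 - p) * a powr p + (1 - a / (a + b)) powr (1 - p) * b powr p
      = a * (a + b) powr (p - 1) + b * (a + b) powr (p - 1)"
    using assms by (simp add: powr_weight_aux)
  also have "\<dots> = (a + b) * (a + b) powr (p - 1)" by (simp add: algebra_simps)
  also have "\<dots> = (a + b) powr p" using assms by (simp add: powr_diff)
  finally show ?thesis .
qed


lemma pair_bound:
  fixes \<phi> :: "'a::euclidean_space \<Rightarrow> real" and g :: "'a \<Rightarrow> 'a \<Rightarrow> real"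
  assumes cont: "continuous_on UNIV \<phi>"
    and der: "\<And>x. (\<phi> has_derivative (\<lambda>h. \<Sum>i\<in>Basis. (h \<bullet> i) * g i x)) (at x)"
    and gc: "\<And>i. i \<in> Basis \<Longrightarrow> continuous_on UNIV (g i)"
    and s: "0 < s" and p: "1 < p" and xy: "x \<noteq> y" and T: "T > 1"
  shows "ennreal ((\<bar>\<phi> x - \<phi> y\<bar> / dist x y powr (alpha_sp TYPE('a) s p)) powr p *
      (omega TYPE('a) * ((T - 1) ^ DIM('a) / ((T - 1) powr s + T powr s) powr p))) * Lambda (0::'a) 1 s p
    \<le> gagliardo_pow UNIV s p \<phi>"
proof -
  have [measurable]: "\<phi> \<in> borel_measurable borel" using cont by (rule borel_measurable_continuous_onI)
  have [measurable]: "ball x e \<in> sets borel" for x :: 'a and e by simp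
  define N where "N = DIM('a)"
  define R where "R = dist x y"
  define a where "a = \<bar>\<phi> x - \<phi> y\<bar>"
  define a1 where "a1 = (T - 1) powr s"
  define b1 where "b1 = T powr s"
  define S where "S = a1 + b1"
  define l where "l = a1 / S"
  define r1 where "r1 = (T - 1) * R"
  define r2 where "r2 = T * R"
  define L where "L = Lambda (0::'a) 1 s p"
  define G where "G = gagliardo_pow UNIV s p \<phi>"
  define I1 where "I1 = (\<integral>\<^sup>+ z. indicator (ball x r1) z * ennreal (\<bar>\<phi> z - \<phi> x\<bar> powr p) \<partial>lborel)"
  define I2 where "I2 = (\<integral>\<^sup>+ z. indicator (ball y r2) z * ennreal (\<bar>\<phi> z - \<phi> y\<bar> powr p) \<partial>lborel)"
  have R: "R > 0" using xy by (simp add: R_def)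
  have r1: "r1 > 0" using R T by (simp add: r1_def)
  have r2: "r2 > 0" using R T by (simp add: r2_def)
  have a1: "a1 > 0" using T by (simp add: a1_def)
  have b1: "b1 > 0" using T by (simp add: b1_def)
  have l: "0 < l" "l < 1" using a1 b1 by (auto simp: l_def S_def field_simps)
  have k1: "L * I1 \<le> ennreal (r1 powr (s * p)) * G"
    unfolding L_def I1_def G_def by (rule key_scaling[OF cont der gc r1]) (use p in auto)
  have k2: "L * I2 \<le> ennreal (r2 powr (s * p)) * G"
    unfolding L_def I2_def G_def by (rule key_scaling[OF cont der gc r2]) (use p in auto)
  define c1 where "c1 = l powr (1 - p)"
  define c2 where "c2 = (1 - l) powr (1 - p)"
  have pw: "ennreal (a powr p) * indicator (ball x r1) z
      \<le> ennreal c1 * (indicator (ball x r1) z * ennreal (\<bar>\<phi> z - \<phi> x\<bar> powr p))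
        + ennreal c2 * (indicator (ball y r2) z * ennreal (\<bar>\<phi> z - \<phi> y\<bar> powr p))" for z
  proof (cases "z \<in> ball x r1")
    case True
    then have z2: "z \<in> ball y r2"
      using dist_triangle[of y z x] by (simp add: r1_def r2_def R_def dist_commute algebra_simps)
    have "a powr p \<le> c1 * \<bar>\<phi> z - \<phi> x\<bar> powr p + c2 * \<bar>\<phi> z - \<phi> y\<bar> powr p"
      unfolding c1_def c2_def a_def using l p by (intro conv_ineq) auto
    then have "ennreal (a powr p) \<le> ennreal (c1 * \<bar>\<phi> z - \<phi> x\<bar> powr p + c2 * \<bar>\<phi> z - \<phi> y\<bar> powr p)"
      by (rule ennreal_leI)
    also have "\<dots> = ennreal c1 * ennreal (\<bar>\<phi> z - \<phi> x\<bar> powr p) + ennreal c2 * ennreal (\<bar>\<phi> z - \<phi> y\<bar> powr p)"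
      by (simp add: ennreal_plus ennreal_mult c1_def c2_def)
    finally show ?thesis using True z2 by simp
  next
    case False
    then show ?thesis by simp
  qed
  have "ennreal (a powr p) * ennreal (omega TYPE('a) * r1 ^ N)
      = (\<integral>\<^sup>+ z. ennreal (a powr p) * indicator (ball x r1) z \<partial>lborel)"
    using r1 by (simp add: emeasure_ball_omega N_def nn_integral_cmult_indicator)
  also have "\<dots> \<le> (\<integral>\<^sup>+ z. ennreal c1 * (indicator (ball x r1) z * ennreal (\<bar>\<phi> z - \<phi> x\<bar> powr p))
        + ennreal c2 * (indicator (ball y r2) z * ennreal (\<bar>\<phi> z - \<phi> y\<bar> powr p)) \<partial>lborel)"
    by (intro nn_integral_mono pw)
  also have "\<dots> = ennreal c1 * I1 + ennreal c2 * I2"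
    unfolding I1_def I2_def
    by (subst nn_integral_add) (simp_all add: nn_integral_cmult)
  finally have int: "ennreal (a powr p) * ennreal (omega TYPE('a) * r1 ^ N) \<le> ennreal c1 * I1 + ennreal c2 * I2" .
  define C where "C = c1 * r1 powr (s * p) + c2 * r2 powr (s * p)"
  have "ennreal (a powr p) * ennreal (omega TYPE('a) * r1 ^ N) * L \<le> (ennreal c1 * I1 + ennreal c2 * I2) * L"
    by (rule mult_right_mono[OF int]) simp
  also have "\<dots> = ennreal c1 * (L * I1) + ennreal c2 * (L * I2)" by (simp add: algebra_simps)
  also have "\<dots> \<le> ennreal c1 * (ennreal (r1 powr (s * p)) * G) + ennreal c2 * (ennreal (r2 powr (s * p)) * G)"
    by (intro add_mono mult_left_mono k1 k2) auto
  also have "\<dots> = ennreal C * G"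
    by (simp add: C_def c1_def c2_def ennreal_plus ennreal_mult algebra_simps)
  finally have main: "ennreal (a powr p) * ennreal (omega TYPE('a) * r1 ^ N) * L \<le> ennreal C * G" .
  have Ceq: "C = R powr (s * p) * S powr p"
  proof -
    have "r1 powr (s * p) = a1 powr p * R powr (s * p)"
      using T R by (simp add: r1_def a1_def powr_mult powr_powr)
    moreover have "r2 powr (s * p) = b1 powr p * R powr (s * p)"
      using T R by (simp add: r2_def b1_def powr_mult powr_powr)
    ultimately have "C = R powr (s * p) * (c1 * a1 powr p + c2 * b1 powr p)"
      by (simp add: C_def algebra_simps)
    also have "c1 * a1 powr p + c2 * b1 powr p = S powr p"
      unfolding c1_def c2_def l_def S_def using powr_weight[OF a1 b1, of p] by simp
    finally show ?thesis .
  qed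
  have Cpos: "C > 0" unfolding Ceq using R a1 b1 by (simp add: S_def)
  have omega0: "omega TYPE('a) \<ge> 0" by (simp add: omega_def)
  have Qeq: "(a / R powr (alpha_sp TYPE('a) s p)) powr p *
      (omega TYPE('a) * ((T - 1) ^ N / ((T - 1) powr s + T powr s) powr p))
      = (1 / C) * (a powr p * (omega TYPE('a) * r1 ^ N))"
  proof -
    have "(a / R powr (alpha_sp TYPE('a) s p)) powr p = a powr p / R powr (s * p - N)"
      using R p by (simp add: a_def powr_divide powr_powr alpha_sp_def N_def algebra_simps)
    moreover have "R powr (s * p - N) = R powr (s * p) / R ^ N"
      using R by (simp add: powr_diff powr_realpow)
    ultimately have X: "(a / R powr (alpha_sp TYPE('a) s p)) powr p = a powr p * R ^ N / R powr (s * p)"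
      using R by simp
    have r1N: "r1 ^ N = (T - 1) ^ N * R ^ N" by (simp add: r1_def power_mult_distrib)
    have "S powr p > 0" using a1 b1 by (simp add: S_def)
    then show ?thesis
      unfolding Ceq X r1N using R by (simp add: S_def a1_def b1_def field_simps)
  qed
  have "ennreal ((a / R powr (alpha_sp TYPE('a) s p)) powr p *
      (omega TYPE('a) * ((T - 1) ^ N / ((T - 1) powr s + T powr s) powr p))) * L
      = ennreal (1 / C) * (ennreal (a powr p) * ennreal (omega TYPE('a) * r1 ^ N) * L)"
  proof -
    have e1: "ennreal (a powr p * (omega TYPE('a) * r1 ^ N)) = ennreal (a powr p) * ennreal (omega TYPE('a) * r1 ^ N)"
      by (rule ennreal_mult) (use omega0 r1 in auto)
    have e2: "ennreal (1 / C * (a powr p * (omega TYPE('a) * r1 ^ N))) = ennreal (1 / C) * ennreal (a powr p * (omega TYPE('a) * r1 ^ N))"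
      by (rule ennreal_mult) (use omega0 r1 Cpos in auto)
    show ?thesis unfolding Qeq e2 e1 by (simp only: mult_ac)
  qed
  also have "\<dots> \<le> ennreal (1 / C) * (ennreal C * G)"
    by (rule mult_left_mono[OF main]) simp
  also have "\<dots> = G" using Cpos by (simp add: ennreal_mult[symmetric] mult.assoc[symmetric])
  finally show ?thesis unfolding a_def R_def L_def G_def N_def .
qed


lemma ennreal_le_of_scaled:
  fixes X G :: ennreal
  assumes "\<And>t. 0 < t \<Longrightarrow> t < 1 \<Longrightarrow> ennreal t * X \<le> G"
  shows "X \<le> G"
proof -
  have S1: "(SUP t\<in>{0<..<1::real}. ennreal t) = 1"
  proof (rule antisym)
    show "(SUP t\<in>{0<..<1::real}. ennreal t) \<le> 1" by (rule SUP_least) auto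
    show "1 \<le> (SUP t\<in>{0<..<1::real}. ennreal t)"
    proof (rule le_SUP_iff[THEN iffD2], intro allI impI)
      fix y :: ennreal assume y: "y < 1"
      have "y < top" using y ennreal_one_less_top less_trans by blast
      then obtain r where r: "y = ennreal r" "r \<ge> 0" by (cases y) auto
      have "ennreal r < ennreal 1" using y r by simp
      then have "r < 1" using r by (subst (asm) ennreal_less_iff) auto
      show "\<exists>t\<in>{0<..<1}. y < ennreal t"
        by (rule bexI[of _ "(r + 1) / 2"]) (use r \<open>r < 1\<close> in \<open>auto intro!: ennreal_lessI\<close>)
    qed
  qed
  have "X = (SUP t\<in>{0<..<1::real}. ennreal t) * X" unfolding S1 by simp
  also have "\<dots> = (SUP t\<in>{0<..<1::real}. ennreal t * X)" by (rule SUP_mult_right_ennreal)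
  also have "\<dots> \<le> G" by (rule SUP_least) (use assms in auto)
  finally show ?thesis .
qed

theorem theorem4p2:
  fixes s p :: real
  assumes "0 < s" "s < 1" "1 < p" "s * p > real DIM('a::euclidean_space)"
  shows "ennreal (theta TYPE('a) s p) * Lambda (0::'a) 1 s p \<le> morrey_const TYPE('a) s p"
  unfolding morrey_const_def
proof (rule Inf_greatest, clarify)
  fix \<phi> :: "'a \<Rightarrow> real"
  assume C: "C_infty_0 \<phi>" and H: "holder_seminorm UNIV (alpha_sp TYPE('a) s p) \<phi> = 1"
  have "Ck 1 \<phi>" "Ck 0 \<phi>" using C unfolding C_infty_0_def by auto
  then obtain g where der: "\<And>x. (\<phi> has_derivative (\<lambda>h. \<Sum>i\<in>Basis. (h \<bullet> i) * g i x)) (at x)"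
    and gc: "\<And>i. i \<in> Basis \<Longrightarrow> continuous_on UNIV (g i)" and cont: "continuous_on UNIV \<phi>"
    by (auto simp: One_nat_def)
  define L where "L = Lambda (0::'a) 1 s p"
  define G where "G = gagliardo_pow UNIV s p \<phi>"
  define f where "f = (\<lambda>T. (T - 1) ^ DIM('a) / ((T - 1) powr s + T powr s) powr p)"
  define \<omega> where "\<omega> = omega TYPE('a)"
  have om0: "\<omega> \<ge> 0" by (simp add: \<omega>_def omega_def)
  have stepA: "ennreal (\<omega> * f T) * L \<le> G" if T: "T > 1" for T
  proof (rule ennreal_le_of_scaled)
    fix t :: real assume t: "0 < t" "t < 1"
    define c where "c = t powr (1 / p)"
    have "t powr (1 / p) < 1 powr (1 / p)" using t assms by (intro powr_less_mono2) auto
    then have c: "0 < c" "c < 1" using t by (auto simp: c_def)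
    have cp: "c powr p = t" using t assms by (simp add: c_def powr_powr)
    have "ennreal c < holder_seminorm UNIV (alpha_sp TYPE('a) s p) \<phi>" unfolding H using c by simp
    then obtain z where z: "z \<in> {(x, y). x \<in> UNIV \<and> y \<in> UNIV \<and> x \<noteq> y}"
      and cz: "ennreal c < ennreal (\<bar>\<phi> (fst z) - \<phi> (snd z)\<bar> / dist (fst z) (snd z) powr (alpha_sp TYPE('a) s p))"
      unfolding holder_seminorm_def less_SUP_iff by blast
    obtain x y where xy: "z = (x, y)" "x \<noteq> y" using z by auto
    define q where "q = \<bar>\<phi> x - \<phi> y\<bar> / dist x y powr (alpha_sp TYPE('a) s p)"
    have cq: "c < q" using cz c unfolding q_def xy by (simp add: ennreal_less_iff)
    have tq: "t \<le> q powr p" unfolding cp[symmetric] using c cq assms by (intro powr_mono2) auto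
    have f0: "f T \<ge> 0" using T by (simp add: f_def)
    have "ennreal t * (ennreal (\<omega> * f T) * L) = ennreal (t * (\<omega> * f T)) * L"
      using t om0 f0 by (simp add: ennreal_mult mult.assoc)
    also have "\<dots> \<le> ennreal (q powr p * (\<omega> * f T)) * L"
      using tq om0 f0 by (intro mult_right_mono ennreal_leI mult_right_mono) auto
    also have "\<dots> \<le> G"
      unfolding q_def G_def L_def f_def \<omega>_def
      by (rule pair_bound[OF cont der gc]) (use assms xy T in auto)
    finally show "ennreal t * (ennreal (\<omega> * f T) * L) \<le> G" .
  qed
  have bdd: "f T \<le> 1" if T: "T > 1" for T
  proof -
    have "(T - 1) ^ DIM('a) \<le> T ^ DIM('a)" using T by (intro power_mono) auto
    also have "\<dots> = T powr (real DIM('a))" using T by (simp add: powr_realpow)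
    also have "\<dots> \<le> T powr (s * p)" using T assms by (intro powr_mono) auto
    also have "\<dots> = (T powr s) powr p" using T by (simp add: powr_powr)
    also have "\<dots> \<le> ((T - 1) powr s + T powr s) powr p" using T assms by (intro powr_mono2) auto
    finally have "(T - 1) ^ DIM('a) \<le> ((T - 1) powr s + T powr s) powr p" .
    moreover have "(T - 1) powr s + T powr s > 0" using T by (intro add_pos_pos) auto
    then have "((T - 1) powr s + T powr s) powr p > 0" by simp
    ultimately show ?thesis unfolding f_def by simp
  qed
  have "ennreal (theta TYPE('a) s p) * L \<le> G"
  proof (rule ennreal_le_of_scaled)
    fix t :: real assume t: "0 < t" "t < 1"
    define Sf where "Sf = (SUP T\<in>{1<..}. f T)"
    have th: "theta TYPE('a) s p = \<omega> * Sf" unfolding theta_def Sf_def f_def \<omega>_def ..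
    show "ennreal t * (ennreal (theta TYPE('a) s p) * L) \<le> G"
    proof (cases "Sf \<le> 0")
      case True
      then have "theta TYPE('a) s p \<le> 0" unfolding th using om0 by (simp add: mult_nonneg_nonpos)
      then have "ennreal (theta TYPE('a) s p) = 0" by (rule ennreal_neg)
      then show ?thesis by simp
    next
      case False
      then have "t * Sf < Sf" using t by simp
      moreover have "bdd_above (f ` {1<..})" using bdd by (intro bdd_aboveI[of _ 1]) auto
      ultimately obtain T where T: "T > 1" "t * Sf < f T"
        unfolding Sf_def by (subst (asm) less_cSUP_iff) auto
      have "ennreal t * (ennreal (theta TYPE('a) s p) * L) = ennreal (\<omega> * (t * Sf)) * L"
        unfolding th using t om0 False by (simp add: ennreal_mult mult_ac)
      also have "\<dots> \<le> ennreal (\<omega> * f T) * L"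
        using T om0 by (intro mult_right_mono ennreal_leI mult_left_mono) auto
      also have "\<dots> \<le> G" by (rule stepA[OF T(1)])
      finally show ?thesis .
    qed
  qed
  then show "ennreal (theta TYPE('a) s p) * Lambda (0::'a) 1 s p \<le> gagliardo_pow UNIV s p \<phi>"
    unfolding L_def G_def .
qed

end
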